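(* Let $\mathbb{X},\mathbb{Y}$ be finite-dimensional real polyhedral Banach spaces with $\dim\mathbb{X}=n$, $\dim\mathbb{Y}=m$. Let $T\in\mathbb{L}(\mathbb{X},\mathbb{Y})$ with $\|T\|=1$ be such that $M_T=F\cup(-F)$ for some face $F$ of $B_{\mathbb{X}}$ and $T(M_T)$ has exactly two elements. If $T$ is $k$-smooth, then $k\in\{pq:1\le p\le n,\ 1\le q\le m\}$.
   Context: Polyhedral: the closed unit ball has finitely many extreme points. $M_T=\{x:\|x\|=1,\|Tx\|=\|T\|\}$. For a unit vector $z$ of a normed space $\mathbb{Z}$, $J(z)=\{f\in\mathbb{Z}^*:\|f\|=1,f(z)=1\}$ and $z$ is $k$-smooth if $\dim\operatorname{span}J(z)=k$ ($T$ is viewed in $\mathbb{L}(\mathbb{X},\mathbb{Y})$ with operator norm). A convex set $F\subset S_{\mathbb{X}}$ is a face of $B_{\mathbb{X}}$ if whenever $x_1,x_2\in S_{\mathbb{X}}$ and $(1-t)x_1+tx_2\in F$ for some $0<t<1$, then $x_1,x_2\in F$. *)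

theory Defs
  imports "HOL-Analysis.Analysis"
begin

definition fin_dim_space :: "'a::real_normed_vector itself \<Rightarrow> bool" where
  "fin_dim_space _ \<longleftrightarrow> (\<exists>B::'a set. finite B \<and> span B = UNIV)"

definition polyhedral_space :: "'a::real_normed_vector itself \<Rightarrow> bool" where
  "polyhedral_space _ \<longleftrightarrow> finite {x::'a. x extreme_point_of (cball 0 1)}"

definition M_op :: "('a::real_normed_vector \<Rightarrow>\<^sub>L 'b::real_normed_vector) \<Rightarrow> 'a set" where
  "M_op T = {x. norm x = 1 \<and> norm (blinfun_apply T x) = norm T}"

definition ball_face :: "'a::real_normed_vector set \<Rightarrow> bool" where
  "ball_face F \<longleftrightarrow> convex F \<and> F \<subseteq> sphere 0 1 \<and>
     (\<forall>x1 x2 t. x1 \<in> sphere 0 1 \<longrightarrow> x2 \<in> sphere 0 1 \<longrightarrow> 0 < t \<longrightarrow> t < 1 \<longrightarrow>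
        (1 - t) *\<^sub>R x1 + t *\<^sub>R x2 \<in> F \<longrightarrow> x1 \<in> F \<and> x2 \<in> F)"

definition J_set :: "'z::real_normed_vector \<Rightarrow> ('z \<Rightarrow>\<^sub>L real) set" where
  "J_set z = {f. norm f = 1 \<and> blinfun_apply f z = 1}"

definition k_smooth :: "nat \<Rightarrow> 'z::real_normed_vector \<Rightarrow> bool" where
  "k_smooth k z \<longleftrightarrow> dim (span (J_set z)) = k"

end

theory Submission
  imports Defs
begin

lemma FD_induct:
  fixes B :: "'v::real_normed_vector set"
  assumes "finite B"
  shows "closed (span B) \<and>
    (\<forall>s::nat\<Rightarrow>'v. (\<forall>k. s k \<in> span B) \<longrightarrow> bounded (range s) \<longrightarrow>
        (\<exists>l r. strict_mono r \<and> l \<in> span B \<and> (s \<circ> r) \<longlonglongrightarrow> l)) \<and>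
    (\<forall>f::'v \<Rightarrow> 'w::real_normed_vector. linear f \<longrightarrow> (\<exists>K. \<forall>x\<in>span B. norm (f x) \<le> K * norm x))"
  using assms
proof (induction B rule: finite_induct)
  case empty
  have e1: "\<exists>l r. strict_mono r \<and> l \<in> span {} \<and> (s \<circ> r) \<longlonglongrightarrow> l"
    if "\<forall>k. s k \<in> span ({}::'v set)" for s :: "nat \<Rightarrow> 'v"
  proof -
    have "s = (\<lambda>_. 0)" using that by auto
    then have "strict_mono (id::nat\<Rightarrow>nat) \<and> 0 \<in> span ({}::'v set) \<and> (s \<circ> id) \<longlonglongrightarrow> 0"
      by (simp add: strict_mono_def o_def)
    then show ?thesis by blast
  qed
  have e2: "\<exists>K. \<forall>x\<in>span {}. norm (f x) \<le> K * norm x" if "linear f" for f :: "'v \<Rightarrow> 'w"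
    using that by (auto simp: linear_0)
  have e3: "strict_mono (id::nat\<Rightarrow>nat)" by (simp add: strict_mono_def)
  have c1: "closed (span ({}::'v set))" by simp
  have c2: "\<forall>s::nat\<Rightarrow>'v. (\<forall>k. s k \<in> span ({}::'v set)) \<longrightarrow> bounded (range s) \<longrightarrow>
        (\<exists>l r. strict_mono r \<and> l \<in> span {} \<and> (s \<circ> r) \<longlonglongrightarrow> l)"
    by (intro allI impI, rule e1, assumption)
  have c3: "\<forall>f::'v \<Rightarrow> 'w. linear f \<longrightarrow> (\<exists>K. \<forall>x\<in>span {}. norm (f x) \<le> K * norm x)"
    by (intro allI impI, rule e2, assumption)
  show ?case using c1 c2 c3 by (intro conjI)
next
  case (insert b B)
  show ?case
  proof (cases "b \<in> span B")
    case True
    then have "span (insert b B) = span B" by (rule span_redundant)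
    then show ?thesis using insert.IH by simp
  next
    case False
    note IH = insert.IH
    have clB: "closed (span B)" using conjunct1[OF IH] .
    define d where "d = infdist b (span B)"
    have dpos: "d > 0" unfolding d_def
      by (rule infdist_pos_not_in_closed[OF clB]) (use False span_zero in auto)
    have coef: "\<exists>c. x - c *\<^sub>R b \<in> span B \<and> \<bar>c\<bar> * d \<le> norm x" if xin: "x \<in> span (insert b B)" for x
    proof -
      obtain c where c: "x - c *\<^sub>R b \<in> span B" using xin span_breakdown_eq by blast
      have "\<bar>c\<bar> * d \<le> norm x"
      proof (cases "c = 0")
        case True then show ?thesis by simp
      next
        case False
        have m: "(c *\<^sub>R b - x) /\<^sub>R c \<in> span B"
          using c span_scale[of "x - c *\<^sub>R b" B "- inverse c"] by (simp add: algebra_simps)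
        have "d \<le> dist b ((c *\<^sub>R b - x) /\<^sub>R c)" unfolding d_def by (rule infdist_le[OF m])
        also have "dist b ((c *\<^sub>R b - x) /\<^sub>R c) = norm x / \<bar>c\<bar>"
        proof -
          have "b - (c *\<^sub>R b - x) /\<^sub>R c = x /\<^sub>R c" using False by (simp add: algebra_simps)
          then show ?thesis by (simp add: dist_norm divide_inverse_commute)
        qed
        finally show ?thesis using False by (simp add: field_simps)
      qed
      then show ?thesis using c by blast
    qed
    have bnd: "\<exists>K. \<forall>x\<in>span (insert b B). norm (f x) \<le> K * norm x"
      if lf: "linear f" for f :: "'v \<Rightarrow> 'w"
    proof -
      obtain K0 where K0: "\<forall>x\<in>span B. norm (f x) \<le> K0 * norm x"
        using conjunct2[OF conjunct2[OF IH], rule_format, OF lf] by blast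
      define K where "K = max K0 0"
      have K: "\<forall>x\<in>span B. norm (f x) \<le> K * norm x" "K \<ge> 0"
        using K0 unfolding K_def by (auto intro: order.trans[OF _ mult_right_mono])
      show ?thesis
      proof (intro exI ballI)
        fix x assume x: "x \<in> span (insert b B)"
        obtain c where c: "x - c *\<^sub>R b \<in> span B" "\<bar>c\<bar> * d \<le> norm x" using coef[OF x] by blast
        have cb: "\<bar>c\<bar> \<le> norm x / d" using c(2) dpos by (simp add: field_simps)
        have "f x = f (x - c *\<^sub>R b) + c *\<^sub>R f b" using lf by (simp add: linear_diff linear_scale)
        then have "norm (f x) \<le> norm (f (x - c *\<^sub>R b)) + \<bar>c\<bar> * norm (f b)"
          by (metis norm_scaleR norm_triangle_ineq)
        also have "\<dots> \<le> K * norm (x - c *\<^sub>R b) + \<bar>c\<bar> * norm (f b)" using K c by auto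
        also have "\<dots> \<le> K * (norm x + \<bar>c\<bar> * norm b) + \<bar>c\<bar> * norm (f b)"
          using K(2) by (intro add_right_mono mult_left_mono) (auto intro: order.trans[OF norm_triangle_ineq4])
        also have "\<dots> = K * norm x + \<bar>c\<bar> * (K * norm b + norm (f b))" by (simp add: algebra_simps)
        also have "\<dots> \<le> K * norm x + (norm x / d) * (K * norm b + norm (f b))"
          using cb K(2) by (intro add_left_mono mult_right_mono) auto
        also have "\<dots> = (K + (K * norm b + norm (f b)) / d) * norm x" by (simp add: field_simps)
        finally show "norm (f x) \<le> (K + (K * norm b + norm (f b)) / d) * norm x" .
      qed
    qed
    have seq: "\<exists>l r. strict_mono r \<and> l \<in> span (insert b B) \<and> (s \<circ> r) \<longlonglongrightarrow> l"
      if s: "\<forall>k. s k \<in> span (insert b B)" and bd: "bounded (range s)" for s :: "nat \<Rightarrow> 'v"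
    proof -
      obtain R where R: "\<forall>k. norm (s k) \<le> R" using bd by (auto simp: bounded_iff)
      define c where "c k = (SOME c. s k - c *\<^sub>R b \<in> span B \<and> \<bar>c\<bar> * d \<le> norm (s k))" for k
      have c: "s k - c k *\<^sub>R b \<in> span B \<and> \<bar>c k\<bar> * d \<le> norm (s k)" for k
        unfolding c_def by (rule someI_ex) (use coef s in blast)
      have cbd: "\<bar>c k\<bar> \<le> R / d" for k
        using c[of k] R[rule_format, of k] dpos by (simp add: field_simps)
      have "bounded (range c)" using cbd by (auto simp: bounded_iff)
      then obtain c0 r1 where r1: "strict_mono r1" "(c \<circ> r1) \<longlonglongrightarrow> c0"
        using bounded_imp_convergent_subsequence by blast
      define y where "y k = s (r1 k) - c (r1 k) *\<^sub>R b" for k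
      have yB: "\<forall>k. y k \<in> span B" using c unfolding y_def by blast
      have "norm (y k) \<le> R + R / d * norm b" for k
      proof -
        have "norm (y k) \<le> norm (s (r1 k)) + \<bar>c (r1 k)\<bar> * norm b"
          unfolding y_def by (metis norm_scaleR norm_triangle_ineq4)
        also have "\<dots> \<le> R + R / d * norm b" using R cbd by (intro add_mono mult_right_mono) auto
        finally show ?thesis .
      qed
      then have "bounded (range y)" by (auto simp: bounded_iff)
      then obtain l1 r2 where r2: "strict_mono r2" "l1 \<in> span B" "(y \<circ> r2) \<longlonglongrightarrow> l1"
        using conjunct1[OF conjunct2[OF IH]] yB by blast
      have cc: "(\<lambda>k. c (r1 (r2 k))) \<longlonglongrightarrow> c0"
        using LIMSEQ_subseq_LIMSEQ[OF r1(2) r2(1)] by (simp add: o_def)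
      have "(\<lambda>k. y (r2 k) + c (r1 (r2 k)) *\<^sub>R b) \<longlonglongrightarrow> l1 + c0 *\<^sub>R b"
        using r2(3) cc by (intro tendsto_intros) (auto simp: o_def)
      moreover have "(\<lambda>k. y (r2 k) + c (r1 (r2 k)) *\<^sub>R b) = s \<circ> (r1 \<circ> r2)"
        by (auto simp: y_def o_def)
      moreover have "l1 + c0 *\<^sub>R b \<in> span (insert b B)"
        using r2(2) by (meson span_add span_base span_mono span_scale insertI1 subset_insertI subsetD)
      moreover have "strict_mono (r1 \<circ> r2)" using r1(1) r2(1) by (rule strict_mono_o)
      ultimately show ?thesis by metis
    qed
    have cl: "closed (span (insert b B))"
      unfolding closed_sequential_limits
    proof (intro allI impI, elim conjE)
      fix s l assume s: "\<forall>n. s n \<in> span (insert b B)" and sl: "s \<longlonglongrightarrow> l"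
      have "bounded (range s)" using sl by (intro convergent_imp_bounded)
      then obtain l' r where r: "strict_mono r" "l' \<in> span (insert b B)" "(s \<circ> r) \<longlonglongrightarrow> l'"
        using seq s by blast
      have "(s \<circ> r) \<longlonglongrightarrow> l" using LIMSEQ_subseq_LIMSEQ[OF sl r(1)] .
      then have "l = l'" using r(3) LIMSEQ_unique by blast
      then show "l \<in> span (insert b B)" using r(2) by simp
    qed
    show ?thesis apply (intro conjI allI impI)
      using cl apply simp
      using seq apply blast
      using bnd apply blast
      done
  qed
qed


lemma fin_dim_basis:
  assumes "fin_dim_space TYPE('v::real_normed_vector)"
  shows "\<exists>B::'v set. finite B \<and> independent B \<and> span B = UNIV"
proof -
  obtain C :: "'v set" where C: "finite C" "span C = UNIV" using assms unfolding fin_dim_space_def by blast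
  obtain B :: "'v set" where B: "independent B" "UNIV \<subseteq> span B" using basis_exists[of "UNIV::'v set"] by blast
  have "finite B" using independent_span_bound[OF C(1) B(1)] C(2) by auto
  then show ?thesis using B by auto
qed

lemma fd_bounded_linear:
  assumes "fin_dim_space TYPE('v::real_normed_vector)" "linear (f::'v \<Rightarrow> 'w::real_normed_vector)"
  shows "bounded_linear f"
proof -
  obtain B :: "'v set" where B: "finite B" "span B = UNIV" using fin_dim_basis[OF assms(1)] by blast
  obtain K where K: "\<forall>x\<in>span B. norm (f x) \<le> K * norm x"
    using conjunct2[OF conjunct2[OF FD_induct[OF B(1)]], rule_format, OF assms(2)] by blast
  show ?thesis
  proof (rule bounded_linear_intro)
    show "f (x + y) = f x + f y" for x y using assms(2) by (simp add: linear_add)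
    show "f (r *\<^sub>R x) = r *\<^sub>R f x" for r x using assms(2) by (simp add: linear_scale)
    show "norm (f x) \<le> norm x * K" for x using K B(2) by (simp add: mult.commute)
  qed
qed

lemma fd_seq_compact:
  assumes "fin_dim_space TYPE('v::real_normed_vector)" "bounded (range (s::nat \<Rightarrow> 'v))"
  shows "\<exists>l r. strict_mono r \<and> (s \<circ> r) \<longlonglongrightarrow> l"
proof -
  obtain B :: "'v set" where B: "finite B" "span B = UNIV" using fin_dim_basis[OF assms(1)] by blast
  have "\<forall>k. s k \<in> span B" using B(2) by simp
  then show ?thesis using conjunct1[OF conjunct2[OF FD_induct[OF B(1)]]] assms(2) by blast
qed

definition lin_on :: "'v::real_vector set \<Rightarrow> ('v \<Rightarrow> real) \<Rightarrow> bool" where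
  "lin_on V g \<longleftrightarrow> (\<forall>x\<in>V. \<forall>y\<in>V. g (x + y) = g x + g y) \<and> (\<forall>x\<in>V. \<forall>c. g (c *\<^sub>R x) = c * g x)"

lemma hb_step:
  fixes B :: "'v::real_normed_vector set"
  assumes lin: "lin_on (span B) g" and bd: "\<forall>m\<in>span B. g m \<le> norm m" and v: "v \<notin> span B"
    and c1: "\<forall>m\<in>span B. g m - norm (m - v) \<le> c" and c2: "\<forall>m\<in>span B. c \<le> norm (m + v) - g m"
  shows "\<exists>g'. lin_on (span (insert v B)) g' \<and> g' v = c \<and> (\<forall>m\<in>span B. g' m = g m) \<and>
     (\<forall>x\<in>span (insert v B). g' x \<le> norm x)"
proof -
  have uniq: "a = a'" if "x - a *\<^sub>R v \<in> span B" "x - a' *\<^sub>R v \<in> span B" for x a a'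
  proof (rule ccontr)
    assume ne: "a \<noteq> a'"
    have "(x - a' *\<^sub>R v) - (x - a *\<^sub>R v) \<in> span B" by (rule span_diff[OF that(2) that(1)])
    then have "(a - a') *\<^sub>R v \<in> span B" by (simp add: algebra_simps)
    then have "inverse (a - a') *\<^sub>R ((a - a') *\<^sub>R v) \<in> span B" by (rule span_scale)
    then have "v \<in> span B" using ne by simp
    then show False using v by simp
  qed
  define a where "a x = (SOME a. x - a *\<^sub>R v \<in> span B)" for x
  have a: "x - a x *\<^sub>R v \<in> span B" if "x \<in> span (insert v B)" for x
    unfolding a_def by (rule someI_ex) (use that span_breakdown_eq in blast)
  have aeq: "a x = t" if "x \<in> span (insert v B)" "x - t *\<^sub>R v \<in> span B" for x t
    using uniq[OF a[OF that(1)] that(2)] .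
  have g0: "g 0 = 0" using lin unfolding lin_on_def by (metis scaleR_zero_left span_zero mult_zero_left)
  define g' where "g' x = g (x - a x *\<^sub>R v) + a x * c" for x
  have sp_add: "x + y \<in> span (insert v B)" if "x \<in> span (insert v B)" "y \<in> span (insert v B)" for x y
    using that by (rule span_add)
  have lin': "lin_on (span (insert v B)) g'"
    unfolding lin_on_def
  proof (intro conjI ballI allI)
    fix x y assume x: "x \<in> span (insert v B)" and y: "y \<in> span (insert v B)"
    have "(x + y) - (a x + a y) *\<^sub>R v = (x - a x *\<^sub>R v) + (y - a y *\<^sub>R v)" by (simp add: algebra_simps)
    also have "\<dots> \<in> span B" using a[OF x] a[OF y] by (rule span_add)
    finally have axy: "a (x + y) = a x + a y" by (rule aeq[OF sp_add[OF x y]])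
    have e: "x + y - (a x + a y) *\<^sub>R v = (x - a x *\<^sub>R v) + (y - a y *\<^sub>R v)" by (simp add: algebra_simps)
    have gg: "g ((x - a x *\<^sub>R v) + (y - a y *\<^sub>R v)) = g (x - a x *\<^sub>R v) + g (y - a y *\<^sub>R v)"
      using lin a[OF x] a[OF y] unfolding lin_on_def by blast
    have "g' (x + y) = g (x + y - (a x + a y) *\<^sub>R v) + (a x + a y) * c" unfolding g'_def axy ..
    also have "\<dots> = g (x - a x *\<^sub>R v) + g (y - a y *\<^sub>R v) + (a x + a y) * c" unfolding e gg ..
    also have "\<dots> = g' x + g' y" unfolding g'_def by (simp add: algebra_simps)
    finally show "g' (x + y) = g' x + g' y" .
  next
    fix x r assume x: "x \<in> span (insert v B)"
    have rx: "r *\<^sub>R x \<in> span (insert v B)" using x by (rule span_scale)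
    have "r *\<^sub>R x - (r * a x) *\<^sub>R v = r *\<^sub>R (x - a x *\<^sub>R v)" by (simp add: algebra_simps)
    also have "\<dots> \<in> span B" using a[OF x] by (rule span_scale)
    finally have arx: "a (r *\<^sub>R x) = r * a x" by (rule aeq[OF rx])
    have "g (r *\<^sub>R x - (r * a x) *\<^sub>R v) = r * g (x - a x *\<^sub>R v)"
      using lin a[OF x] unfolding lin_on_def
      by (metis \<open>r *\<^sub>R x - (r * a x) *\<^sub>R v = r *\<^sub>R (x - a x *\<^sub>R v)\<close>)
    then show "g' (r *\<^sub>R x) = r * g' x"
      unfolding g'_def arx by (simp add: algebra_simps)
  qed
  have vin: "v \<in> span (insert v B)" by (simp add: span_base)
  have av: "a v = 1" by (rule aeq[OF vin]) (simp add: span_zero)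
  have gv: "g' v = c" unfolding g'_def av using g0 by simp
  have gm: "g' m = g m" if m: "m \<in> span B" for m
  proof -
    have "m \<in> span (insert v B)" using m by (meson span_mono subset_insertI subsetD)
    then have "a m = 0" by (rule aeq) (use m in simp)
    then show ?thesis unfolding g'_def by simp
  qed
  have bnd: "g' x \<le> norm x" if x: "x \<in> span (insert v B)" for x
  proof -
    define m where "m = x - a x *\<^sub>R v"
    define \<alpha> where "\<alpha> = a x"
    have m: "m \<in> span B" unfolding m_def using a[OF x] .
    have xm: "x = m + \<alpha> *\<^sub>R v" unfolding m_def \<alpha>_def by simp
    have gx: "g' x = g m + \<alpha> * c" unfolding g'_def m_def \<alpha>_def by simp
    consider "\<alpha> > 0" | "\<alpha> < 0" | "\<alpha> = 0" by linarith
    then show ?thesis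
    proof cases
      case 1
      have mm: "inverse \<alpha> *\<^sub>R m \<in> span B" using m by (rule span_scale)
      have "c \<le> norm (inverse \<alpha> *\<^sub>R m + v) - g (inverse \<alpha> *\<^sub>R m)" using c2 mm by blast
      also have "inverse \<alpha> *\<^sub>R m + v = inverse \<alpha> *\<^sub>R (m + \<alpha> *\<^sub>R v)" using 1 by (simp add: algebra_simps)
      also have "g (inverse \<alpha> *\<^sub>R m) = inverse \<alpha> * g m" using lin m unfolding lin_on_def by blast
      finally have "c \<le> inverse \<alpha> * norm (m + \<alpha> *\<^sub>R v) - inverse \<alpha> * g m" using 1 by simp
      then have "\<alpha> * c \<le> norm (m + \<alpha> *\<^sub>R v) - g m" using 1 by (simp add: field_simps)
      then show ?thesis using gx xm by simp
    next
      case 2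
      define \<beta> where "\<beta> = - \<alpha>"
      have b: "\<beta> > 0" using 2 unfolding \<beta>_def by simp
      have mm: "inverse \<beta> *\<^sub>R m \<in> span B" using m by (rule span_scale)
      have "g (inverse \<beta> *\<^sub>R m) - norm (inverse \<beta> *\<^sub>R m - v) \<le> c" using c1 mm by blast
      also have "inverse \<beta> *\<^sub>R m - v = inverse \<beta> *\<^sub>R (m + \<alpha> *\<^sub>R v)" using b unfolding \<beta>_def by (simp add: algebra_simps)
      also have "g (inverse \<beta> *\<^sub>R m) = inverse \<beta> * g m" using lin m unfolding lin_on_def by blast
      finally have "inverse \<beta> * g m - inverse \<beta> * norm (m + \<alpha> *\<^sub>R v) \<le> c" using b by simp
      then have "g m - norm (m + \<alpha> *\<^sub>R v) \<le> \<beta> * c" using b by (simp add: field_simps)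
      then show ?thesis using gx xm unfolding \<beta>_def by simp
    next
      case 3
      then show ?thesis using gx xm bd m by simp
    qed
  qed
  show ?thesis using lin' gv gm bnd by blast
qed

lemma hb_c_exists:
  fixes B :: "'v::real_normed_vector set"
  assumes lin: "lin_on (span B) g" and bd: "\<forall>m\<in>span B. g m \<le> norm m"
  shows "\<exists>c. (\<forall>m\<in>span B. g m - norm (m - v) \<le> c) \<and> (\<forall>m\<in>span B. c \<le> norm (m + v) - g m)"
proof -
  have key: "g m1 - norm (m1 - v) \<le> norm (m2 + v) - g m2" if "m1 \<in> span B" "m2 \<in> span B" for m1 m2
  proof -
    have "g m1 + g m2 = g (m1 + m2)" using lin that unfolding lin_on_def by simp
    also have "\<dots> \<le> norm (m1 + m2)" using bd span_add[OF that] by blast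
    also have "m1 + m2 = (m1 - v) + (m2 + v)" by simp
    also have "norm \<dots> \<le> norm (m1 - v) + norm (m2 + v)" by (rule norm_triangle_ineq)
    finally show ?thesis by simp
  qed
  define X where "X = (\<lambda>m. g m - norm (m - v)) ` span B"
  have ne: "X \<noteq> {}" unfolding X_def using span_zero by blast
  have bdd: "bdd_above X" unfolding X_def bdd_above_def using key span_zero by blast
  show ?thesis
  proof (intro exI conjI ballI)
    fix m assume "m \<in> span B"
    then show "g m - norm (m - v) \<le> Sup X" unfolding X_def by (intro cSup_upper) (use bdd X_def in auto)
  next
    fix m assume m: "m \<in> span B"
    show "Sup X \<le> norm (m + v) - g m" using ne by (rule cSup_least) (use key m in \<open>auto simp: X_def\<close>)
  qed
qed

lemma hb_induct:
  fixes B :: "'v::real_normed_vector set"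
  assumes "finite B" "u \<noteq> 0"
  shows "\<exists>g. lin_on (span (insert u B)) g \<and> g u = norm u \<and> (\<forall>x\<in>span (insert u B). g x \<le> norm x)"
  using assms(1)
proof (induction B rule: finite_induct)
  case empty
  have "\<exists>g'. lin_on (span (insert u {})) g' \<and> g' u = norm u \<and> (\<forall>m\<in>span {}. g' m = (\<lambda>_. 0) m) \<and>
     (\<forall>x\<in>span (insert u {}). g' x \<le> norm x)"
    by (rule hb_step) (use assms(2) in \<open>auto simp: lin_on_def\<close>)
  then show ?case by blast
next
  case (insert b B)
  show ?case
  proof (cases "b \<in> span (insert u B)")
    case True
    have "span (insert u (insert b B)) = span (insert u B)"
      by (metis insert_commute span_redundant True)
    then show ?thesis using insert.IH by simp
  next
    case False
    obtain g where g: "lin_on (span (insert u B)) g" "g u = norm u" "\<forall>x\<in>span (insert u B). g x \<le> norm x"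
      using insert.IH by blast
    obtain c where c: "\<forall>m\<in>span (insert u B). g m - norm (m - b) \<le> c" "\<forall>m\<in>span (insert u B). c \<le> norm (m + b) - g m"
      using hb_c_exists[OF g(1) g(3)] by blast
    obtain g' where g': "lin_on (span (insert b (insert u B))) g'" "\<forall>m\<in>span (insert u B). g' m = g m"
      "\<forall>x\<in>span (insert b (insert u B)). g' x \<le> norm x"
      using hb_step[OF g(1) g(3) False c] by blast
    have eq: "insert b (insert u B) = insert u (insert b B)" by auto
    have "g' u = norm u" using g'(2) g(2) by (simp add: span_base)
    then show ?thesis using g' eq by metis
  qed
qed

lemma hb_fd:
  assumes "fin_dim_space TYPE('v::real_normed_vector)" "(u::'v) \<noteq> 0"
  shows "\<exists>g::'v \<Rightarrow>\<^sub>L real. norm g = 1 \<and> blinfun_apply g u = norm u"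
proof -
  obtain B :: "'v set" where B: "finite B" "span B = UNIV" using fin_dim_basis[OF assms(1)] by blast
  obtain g where g: "lin_on (span (insert u B)) g" "g u = norm u" "\<forall>x\<in>span (insert u B). g x \<le> norm x"
    using hb_induct[OF B(1) assms(2)] by blast
  have U: "span (insert u B) = UNIV" using B(2) span_mono[of B "insert u B"] by auto
  have add: "g (x + y) = g x + g y" and sc: "g (r *\<^sub>R x) = r * g x" for x y r
    using g(1) U unfolding lin_on_def by auto
  have ab: "\<bar>g x\<bar> \<le> norm x" for x
  proof -
    have "g (- x) = - g x" using sc[of "-1" x] by simp
    then show ?thesis using g(3) U by (metis abs_le_iff iso_tuple_UNIV_I minus_le_iff norm_minus_cancel)
  qed
  have bl: "bounded_linear g"
    by (rule bounded_linear_intro[where K=1]) (use add sc ab in auto)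
  define G where "G = Blinfun g"
  have Gapp: "blinfun_apply G = g" unfolding G_def using bl by (rule bounded_linear_Blinfun_apply)
  have n1: "norm G \<le> 1" by (rule norm_blinfun_bound) (use ab Gapp in auto)
  have "norm u \<le> norm G * norm u" using norm_blinfun[of G u] g(2) Gapp by simp
  then have "1 \<le> norm G" using assms(2) by simp
  then show ?thesis using n1 Gapp g(2) by (intro exI[of _ G]) auto
qed

lemma blinfun_lin: "linear (\<lambda>g::'v::real_normed_vector \<Rightarrow>\<^sub>L 'w::real_normed_vector. blinfun_apply g x)"
  by (intro linearI) (auto simp: blinfun.add_left blinfun.scaleR_left)

lemma annih:
  fixes E :: "('v::real_normed_vector \<Rightarrow>\<^sub>L real) set"
  assumes "finite E"
  shows "\<forall>f. (\<forall>x. (\<forall>e\<in>E. blinfun_apply e x = 0) \<longrightarrow> blinfun_apply f x = 0) \<longrightarrow> f \<in> span E"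
  using assms
proof (induction E rule: finite_induct)
  case empty
  show ?case
  proof (intro allI impI)
    fix f :: "'v \<Rightarrow>\<^sub>L real" assume "\<forall>x. (\<forall>e\<in>{}. blinfun_apply e x = 0) \<longrightarrow> blinfun_apply f x = 0"
    then have "f = 0" by (intro blinfun_eqI) simp
    then show "f \<in> span {}" by simp
  qed
next
  case (insert e E)
  show ?case
  proof (intro allI impI)
    fix f :: "'v \<Rightarrow>\<^sub>L real"
    assume hf: "\<forall>x. (\<forall>e'\<in>insert e E. blinfun_apply e' x = 0) \<longrightarrow> blinfun_apply f x = 0"
    show "f \<in> span (insert e E)"
    proof (cases "\<forall>x. (\<forall>e'\<in>E. blinfun_apply e' x = 0) \<longrightarrow> blinfun_apply e x = 0")
      case True
      have "\<forall>x. (\<forall>e'\<in>E. blinfun_apply e' x = 0) \<longrightarrow> blinfun_apply f x = 0"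
        using hf True by auto
      then have "f \<in> span E" using insert.IH by blast
      then show ?thesis by (meson span_mono subset_insertI subsetD)
    next
      case False
      then obtain z where z: "\<forall>e'\<in>E. blinfun_apply e' z = 0" "blinfun_apply e z \<noteq> 0" by blast
      define z' where "z' = z /\<^sub>R blinfun_apply e z"
      have z': "\<forall>e'\<in>E. blinfun_apply e' z' = 0" "blinfun_apply e z' = 1"
        using z unfolding z'_def by (auto simp: blinfun.scaleR_right)
      define h where "h = f - blinfun_apply f z' *\<^sub>R e"
      have "\<forall>x. (\<forall>e'\<in>E. blinfun_apply e' x = 0) \<longrightarrow> blinfun_apply h x = 0"
      proof (intro allI impI)
        fix x assume x: "\<forall>e'\<in>E. blinfun_apply e' x = 0"
        define w where "w = x - blinfun_apply e x *\<^sub>R z'"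
        have "\<forall>e'\<in>insert e E. blinfun_apply e' w = 0"
          using x z' unfolding w_def by (auto simp: blinfun.diff_right blinfun.scaleR_right)
        then have "blinfun_apply f w = 0" using hf by blast
        then have "blinfun_apply f x = blinfun_apply e x * blinfun_apply f z'"
          unfolding w_def by (simp add: blinfun.diff_right blinfun.scaleR_right)
        then show "blinfun_apply h x = 0" unfolding h_def by (simp add: blinfun.diff_left blinfun.scaleR_left)
      qed
      then have "h \<in> span E" using insert.IH by blast
      then have "h \<in> span (insert e E)" by (meson span_mono subset_insertI subsetD)
      moreover have "blinfun_apply f z' *\<^sub>R e \<in> span (insert e E)" by (simp add: span_base span_scale)
      ultimately have "h + blinfun_apply f z' *\<^sub>R e \<in> span (insert e E)" by (rule span_add)
      then show ?thesis unfolding h_def by simp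
    qed
  qed
qed

lemma dual_vec:
  fixes G :: "('v::real_normed_vector \<Rightarrow>\<^sub>L real) set"
  assumes "finite G" "independent G" "g \<in> G"
  shows "\<exists>y. blinfun_apply g y = 1 \<and> (\<forall>g'\<in>G - {g}. blinfun_apply g' y = 0)"
proof (rule ccontr)
  assume H: "\<not> ?thesis"
  have "\<forall>x. (\<forall>e\<in>G - {g}. blinfun_apply e x = 0) \<longrightarrow> blinfun_apply g x = 0"
  proof (intro allI impI, rule ccontr)
    fix x assume x: "\<forall>e\<in>G - {g}. blinfun_apply e x = 0" and nz: "blinfun_apply g x \<noteq> 0"
    define y where "y = x /\<^sub>R blinfun_apply g x"
    have "blinfun_apply g y = 1 \<and> (\<forall>g'\<in>G - {g}. blinfun_apply g' y = 0)"
      using x nz unfolding y_def by (auto simp: blinfun.scaleR_right)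
    then show False using H by blast
  qed
  then have "g \<in> span (G - {g})" using annih[of "G - {g}"] assms(1) by blast
  then show False using assms(2,3) dependent_def by blast
qed

lemma dual_fin_dim:
  assumes "fin_dim_space TYPE('v::real_normed_vector)"
  shows "\<exists>E::('v \<Rightarrow>\<^sub>L real) set. finite E \<and> span E = UNIV \<and> card E \<le> dim (UNIV::'v set)"
proof -
  obtain B :: "'v set" where B: "finite B" "independent B" "span B = UNIV" using fin_dim_basis[OF assms] by blast
  have cardB: "card B = dim (UNIV::'v set)" using basis_card_eq_dim[of B UNIV] B by auto
  have ex: "\<forall>b. \<exists>h. linear h \<and> (\<forall>x\<in>B. h x = (if x = b then 1 else (0::real)))"
  proof
    fix b show "\<exists>h. linear h \<and> (\<forall>x\<in>B. h x = (if x = b then 1 else (0::real)))"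
      by (rule linear_independent_extend[OF B(2)])
  qed
  from choice[OF ex] obtain h where h0: "\<forall>b. linear (h b) \<and> (\<forall>x\<in>B. h b x = (if x = b then 1 else (0::real)))" ..
  have h1: "\<And>b. linear (h b)" using h0 by simp
  have h2: "\<And>b x. x \<in> B \<Longrightarrow> h b x = (if x = b then 1 else 0)" using h0 by simp
  note h = h1 h2
  have blh: "bounded_linear (h b)" for b using fd_bounded_linear[OF assms h(1)] .
  define e where "e b = Blinfun (h b)" for b
  have eapp: "blinfun_apply (e b) = h b" for b unfolding e_def using blh by (rule bounded_linear_Blinfun_apply)
  define E where "E = e ` B"
  have "f \<in> span E" for f :: "'v \<Rightarrow>\<^sub>L real"
  proof -
    have "f = (\<Sum>b\<in>B. blinfun_apply f b *\<^sub>R e b)"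
    proof (rule blinfun_eqI)
      fix x :: 'v
      have l1: "linear (blinfun_apply f)" by (rule bounded_linear.linear[OF blinfun.bounded_linear_right])
      have l2: "linear (\<lambda>x. blinfun_apply (\<Sum>b\<in>B. blinfun_apply f b *\<^sub>R e b) x)" by (rule bounded_linear.linear[OF blinfun.bounded_linear_right])
      have "x \<in> span B" using B(3) by simp
      then show "blinfun_apply f x = blinfun_apply (\<Sum>b\<in>B. blinfun_apply f b *\<^sub>R e b) x"
      proof (rule linear_eq_on_span[OF l1 l2, rotated])
        fix b' assume b': "b' \<in> B"
        have "blinfun_apply (\<Sum>b\<in>B. blinfun_apply f b *\<^sub>R e b) b' = (\<Sum>b\<in>B. blinfun_apply f b * h b b')"
          by (simp add: blinfun.sum_left blinfun.scaleR_left eapp)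
        also have "\<dots> = (\<Sum>b\<in>B. if b = b' then blinfun_apply f b else 0)"
          by (rule sum.cong) (auto simp: h(2)[OF b'])
        also have "\<dots> = blinfun_apply f b'" using B(1) b' by simp
        finally show "blinfun_apply f b' = blinfun_apply (\<Sum>b\<in>B. blinfun_apply f b *\<^sub>R e b) b'" by simp
      qed
    qed
    also have "\<dots> \<in> span E" unfolding E_def
      by (intro span_sum span_scale span_base) auto
    finally show ?thesis .
  qed
  then have "span E = UNIV" by auto
  moreover have "finite E" "card E \<le> dim (UNIV::'v set)"
    unfolding E_def using B(1) cardB card_image_le[of B e] by auto
  ultimately show ?thesis by blast
qed

lemma dual_fin_dim_space:
  assumes "fin_dim_space TYPE('v::real_normed_vector)"
  shows "fin_dim_space TYPE('v \<Rightarrow>\<^sub>L real)"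
  using dual_fin_dim[OF assms] unfolding fin_dim_space_def by blast

lemma op_witness:
  fixes A :: "'a::real_normed_vector \<Rightarrow>\<^sub>L 'b::real_normed_vector"
  assumes "norm A > c" "c \<ge> 0"
  shows "\<exists>x. norm x = 1 \<and> norm (blinfun_apply A x) > c"
proof (rule ccontr)
  assume H: "\<not> ?thesis"
  have "norm (blinfun_apply A x) \<le> c * norm x" for x
  proof (cases "x = 0")
    case True then show ?thesis by simp
  next
    case False
    have "norm (x /\<^sub>R norm x) = 1" using False by simp
    then have "\<not> c < norm (blinfun_apply A (x /\<^sub>R norm x))" using H by blast
    then have "norm (blinfun_apply A (x /\<^sub>R norm x)) \<le> c" by simp
    then have "norm (blinfun_apply A x) / norm x \<le> c"
      by (simp add: blinfun.scaleR_right divide_inverse_commute)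
    then show ?thesis using False by (simp add: field_simps)
  qed
  then have "norm A \<le> c" using assms(2) by (intro norm_blinfun_bound) auto
  then show False using assms(1) by simp
qed

lemma BT:
  assumes "(f \<longlongrightarrow> a) F" "(g \<longlongrightarrow> b) F"
  shows "((\<lambda>x. blinfun_apply (f x) (g x)) \<longlongrightarrow> blinfun_apply a b) F"
  using bounded_bilinear.tendsto[OF bounded_bilinear_blinfun_apply assms] .

lemma upper_key:
  fixes T S :: "'a::banach \<Rightarrow>\<^sub>L 'b::banach" and F :: "'a set" and y :: 'b
    and f :: "('a \<Rightarrow>\<^sub>L 'b) \<Rightarrow>\<^sub>L real"
  assumes fa: "fin_dim_space TYPE('a)" and fb: "fin_dim_space TYPE('b)"
    and nT: "norm T = 1" and M: "M_op T = F \<union> uminus ` F" and TF: "\<forall>x\<in>F. blinfun_apply T x = y"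
    and f: "f \<in> J_set T"
    and S: "\<forall>x\<in>F. \<forall>g\<in>J_set y. blinfun_apply g (blinfun_apply S x) = 0"
  shows "blinfun_apply f S \<le> 0"
proof (rule ccontr)
  assume "\<not> blinfun_apply f S \<le> 0"
  then have fpos: "blinfun_apply f S > 0" by simp
  define \<epsilon> where "\<epsilon> = blinfun_apply f S / 2"
  have eps: "\<epsilon> > 0" unfolding \<epsilon>_def using fpos by simp
  have nf: "norm f = 1" and fT: "blinfun_apply f T = 1" using f unfolding J_set_def by auto
  define t where "t k = inverse (real (Suc k))" for k
  have tpos: "t k > 0" for k unfolding t_def by simp
  have t0: "t \<longlonglongrightarrow> 0" unfolding t_def by (rule LIMSEQ_inverse_real_of_nat)
  have big: "norm (T + t k *\<^sub>R S) > 1 + \<epsilon> * t k" for k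
  proof -
    have e1: "blinfun_apply f (T + t k *\<^sub>R S) = 1 + 2 * \<epsilon> * t k"
      using fT unfolding \<epsilon>_def by (simp add: blinfun.add_right blinfun.scaleR_right)
    have e2: "blinfun_apply f (T + t k *\<^sub>R S) \<le> norm (T + t k *\<^sub>R S)"
      using norm_blinfun[of f "T + t k *\<^sub>R S"] nf by simp
    have "\<epsilon> * t k > 0" using eps tpos[of k] by simp
    then show ?thesis using e1 e2 by linarith
  qed
  have "\<forall>k. \<exists>x. norm x = 1 \<and> norm (blinfun_apply (T + t k *\<^sub>R S) x) > 1 + \<epsilon> * t k"
  proof
    fix k show "\<exists>x. norm x = 1 \<and> norm (blinfun_apply (T + t k *\<^sub>R S) x) > 1 + \<epsilon> * t k"
      by (rule op_witness[OF big]) (use eps tpos[of k] in \<open>simp add: add_nonneg_nonneg\<close>)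
  qed
  from choice[OF this] obtain xs where xs: "\<forall>k. norm (xs k) = 1 \<and> norm (blinfun_apply (T + t k *\<^sub>R S) (xs k)) > 1 + \<epsilon> * t k" ..
  define u where "u k = blinfun_apply (T + t k *\<^sub>R S) (xs k)" for k
  have u_eq: "u k = blinfun_apply T (xs k) + t k *\<^sub>R blinfun_apply S (xs k)" for k
    unfolding u_def by (simp add: blinfun.add_left blinfun.scaleR_left)
  have unorm: "norm (u k) > 1 + \<epsilon> * t k" for k using xs unfolding u_def by blast
  have u1: "norm (u k) > 1" for k
  proof -
    have "\<epsilon> * t k > 0" using eps tpos[of k] by simp
    then show ?thesis using unorm[of k] by linarith
  qed
  have "bounded (range xs)" using xs by (auto simp: bounded_iff)
  then obtain x0 r1 where r1: "strict_mono r1" "(xs \<circ> r1) \<longlonglongrightarrow> x0"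
    using fd_seq_compact[OF fa] by blast
  have "\<forall>k. \<exists>g::'b \<Rightarrow>\<^sub>L real. norm g = 1 \<and> blinfun_apply g (u k) = norm (u k)"
  proof
    fix k have "u k \<noteq> 0" using u1[of k] by auto
    then show "\<exists>g::'b \<Rightarrow>\<^sub>L real. norm g = 1 \<and> blinfun_apply g (u k) = norm (u k)" by (rule hb_fd[OF fb])
  qed
  from choice[OF this] obtain gs where gs: "\<forall>k. norm (gs k) = 1 \<and> blinfun_apply (gs k) (u k) = norm (u k)" ..
  have gS: "blinfun_apply (gs k) (blinfun_apply S (xs k)) > \<epsilon>" for k
  proof -
    have "blinfun_apply (gs k) (blinfun_apply T (xs k)) \<le> norm (gs k) * norm (blinfun_apply T (xs k))"
      using norm_blinfun[of "gs k" "blinfun_apply T (xs k)"] by simp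
    also have "\<dots> \<le> 1" using gs norm_blinfun[of T "xs k"] nT xs by simp
    finally have a: "blinfun_apply (gs k) (blinfun_apply T (xs k)) \<le> 1" .
    have "norm (u k) = blinfun_apply (gs k) (blinfun_apply T (xs k)) + t k * blinfun_apply (gs k) (blinfun_apply S (xs k))"
    proof -
      have "norm (u k) = blinfun_apply (gs k) (u k)" using gs by simp
      also have "\<dots> = blinfun_apply (gs k) (blinfun_apply T (xs k)) + t k * blinfun_apply (gs k) (blinfun_apply S (xs k))"
        unfolding u_eq by (simp add: blinfun.add_right blinfun.scaleR_right)
      finally show ?thesis .
    qed
    then have "1 + \<epsilon> * t k < 1 + t k * blinfun_apply (gs k) (blinfun_apply S (xs k))"
      using a unorm[of k] by linarith
    then show ?thesis using tpos[of k] by (simp add: mult.commute)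
  qed
  have "bounded (range (\<lambda>k. gs (r1 k)))" using gs by (auto simp: bounded_iff)
  then obtain g0 r2 where r2: "strict_mono r2" "((\<lambda>k. gs (r1 k)) \<circ> r2) \<longlonglongrightarrow> g0"
    using fd_seq_compact[OF dual_fin_dim_space[OF fb]] by blast
  define r where "r = r1 \<circ> r2"
  have xr: "(\<lambda>k. xs (r k)) \<longlonglongrightarrow> x0" using LIMSEQ_subseq_LIMSEQ[OF r1(2) r2(1)] by (simp add: r_def o_def)
  have gr: "(\<lambda>k. gs (r k)) \<longlonglongrightarrow> g0" using r2(2) by (simp add: r_def o_def)
  have tr: "(\<lambda>k. t (r k)) \<longlonglongrightarrow> 0"
    using LIMSEQ_subseq_LIMSEQ[OF t0 strict_mono_o[OF r1(1) r2(1)]] by (simp add: r_def o_def)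
  have Txr: "(\<lambda>k. blinfun_apply T (xs (r k))) \<longlonglongrightarrow> blinfun_apply T x0"
    by (rule BT[OF tendsto_const xr])
  have Sxr: "(\<lambda>k. blinfun_apply S (xs (r k))) \<longlonglongrightarrow> blinfun_apply S x0"
    by (rule BT[OF tendsto_const xr])
  have ur: "(\<lambda>k. u (r k)) \<longlonglongrightarrow> blinfun_apply T x0"
  proof -
    have "(\<lambda>k. blinfun_apply T (xs (r k)) + t (r k) *\<^sub>R blinfun_apply S (xs (r k))) \<longlonglongrightarrow>
        blinfun_apply T x0 + 0 *\<^sub>R blinfun_apply S x0"
      by (intro tendsto_intros Txr Sxr tr)
    then show ?thesis by (simp add: u_eq)
  qed
  have nx0: "norm x0 = 1"
  proof -
    have "(\<lambda>k. norm (xs (r k))) \<longlonglongrightarrow> norm x0" by (rule tendsto_norm[OF xr])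
    moreover have "(\<lambda>k. norm (xs (r k))) = (\<lambda>k. 1)" using xs by simp
    ultimately show ?thesis using LIMSEQ_unique tendsto_const by metis
  qed
  have nTx0: "norm (blinfun_apply T x0) = 1"
  proof (rule antisym)
    show "norm (blinfun_apply T x0) \<le> 1" using norm_blinfun[of T x0] nT nx0 by simp
    have "(\<lambda>k. norm (u (r k))) \<longlonglongrightarrow> norm (blinfun_apply T x0)" by (rule tendsto_norm[OF ur])
    then show "1 \<le> norm (blinfun_apply T x0)"
      by (rule LIMSEQ_le_const) (use u1 less_imp_le in blast)
  qed
  have x0M: "x0 \<in> M_op T" unfolding M_op_def using nx0 nTx0 nT by simp
  have ng0: "norm g0 = 1"
  proof -
    have "(\<lambda>k. norm (gs (r k))) \<longlonglongrightarrow> norm g0" by (rule tendsto_norm[OF gr])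
    moreover have "(\<lambda>k. norm (gs (r k))) = (\<lambda>k. 1)" using gs by simp
    ultimately show ?thesis using LIMSEQ_unique tendsto_const by metis
  qed
  have g0T: "blinfun_apply g0 (blinfun_apply T x0) = 1"
  proof -
    have "(\<lambda>k. blinfun_apply (gs (r k)) (u (r k))) \<longlonglongrightarrow> blinfun_apply g0 (blinfun_apply T x0)"
      by (rule BT[OF gr ur])
    moreover have "(\<lambda>k. blinfun_apply (gs (r k)) (u (r k))) = (\<lambda>k. norm (u (r k)))" using gs by simp
    moreover have "(\<lambda>k. norm (u (r k))) \<longlonglongrightarrow> 1" using tendsto_norm[OF ur] nTx0 by simp
    ultimately show ?thesis using LIMSEQ_unique by metis
  qed
  have g0S: "blinfun_apply g0 (blinfun_apply S x0) \<ge> \<epsilon>"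
  proof -
    have "(\<lambda>k. blinfun_apply (gs (r k)) (blinfun_apply S (xs (r k)))) \<longlonglongrightarrow> blinfun_apply g0 (blinfun_apply S x0)"
      by (rule BT[OF gr Sxr])
    then show ?thesis by (rule LIMSEQ_le_const) (use gS less_imp_le in blast)
  qed
  have "x0 \<in> F \<or> x0 \<in> uminus ` F" using x0M M by simp
  then show False
  proof
    assume x0F: "x0 \<in> F"
    then have "blinfun_apply T x0 = y" using TF by blast
    then have "g0 \<in> J_set y" using ng0 g0T unfolding J_set_def by simp
    then have "blinfun_apply g0 (blinfun_apply S x0) = 0" using S x0F by blast
    then show False using g0S eps by simp
  next
    assume "x0 \<in> uminus ` F"
    then obtain z where z: "z \<in> F" "x0 = - z" by blast
    have Tz: "blinfun_apply T z = y" using TF z(1) by blast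
    have "blinfun_apply (- g0) y = 1"
      using g0T z(2) Tz by (simp add: blinfun.minus_right blinfun.minus_left)
    moreover have "norm (- g0) = 1" using ng0 by simp
    ultimately have "- g0 \<in> J_set y" unfolding J_set_def by simp
    then have "blinfun_apply (- g0) (blinfun_apply S z) = 0" using S z(1) by blast
    then have "blinfun_apply g0 (blinfun_apply S x0) = 0"
      using z(2) by (simp add: blinfun.minus_right blinfun.minus_left)
    then show False using g0S eps by simp
  qed
qed

lemma finite_convex_eq:
  fixes C :: "'v::real_vector set"
  assumes "convex C" "finite C" "a \<in> C" "b \<in> C"
  shows "a = b"
proof (rule ccontr)
  assume ne: "a \<noteq> b"
  define h where "h t = (1 - t) *\<^sub>R a + t *\<^sub>R b" for t :: real
  have "h ` {0..1} \<subseteq> C"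
  proof
    fix z assume "z \<in> h ` {0..1}"
    then obtain t where t: "t \<in> {0..1}" "z = h t" by blast
    show "z \<in> C" using assms(1,3,4) t unfolding convex_def h_def by auto
  qed
  then have fin: "finite (h ` {0..1})" using assms(2) finite_subset by blast
  have "inj_on h {0..1}"
  proof (rule inj_onI)
    fix s t assume "h s = h t"
    then have "(s - t) *\<^sub>R (b - a) = 0" unfolding h_def by (simp add: algebra_simps)
    then show "s = t" using ne by simp
  qed
  then have "finite {0..1::real}" using fin finite_imageD by blast
  then show False using infinite_Icc[of "0::real" 1] by simp
qed

definition phi :: "'a::real_normed_vector \<Rightarrow> ('b::real_normed_vector \<Rightarrow>\<^sub>L real) \<Rightarrow> (('a \<Rightarrow>\<^sub>L 'b) \<Rightarrow>\<^sub>L real)" where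
  "phi x g = Blinfun (\<lambda>S. blinfun_apply g (blinfun_apply S x))"

lemma phi_apply: "blinfun_apply (phi x g) S = blinfun_apply g (blinfun_apply S x)"
proof -
  have "bounded_linear (\<lambda>S::'a \<Rightarrow>\<^sub>L 'b. blinfun_apply g (blinfun_apply S x))"
    by (rule bounded_linear_compose[OF blinfun.bounded_linear_right blinfun.bounded_linear_left])
  then show ?thesis unfolding phi_def by (simp add: bounded_linear_Blinfun_apply)
qed

lemma main_assembly:
  fixes T :: "'a::banach \<Rightarrow>\<^sub>L 'b::banach" and F :: "'a set" and k n m :: nat
  assumes fa: "fin_dim_space TYPE('a)" and fb: "fin_dim_space TYPE('b)"
    and dn: "dim (UNIV :: 'a set) = n" and dm: "dim (UNIV :: 'b set) = m"
    and nT: "norm T = 1"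
    and face: "ball_face F" and M: "M_op T = F \<union> uminus ` F"
    and card2: "card (blinfun_apply T ` M_op T) = 2"
    and ks: "k_smooth k T"
  shows "\<exists>p q. 1 \<le> p \<and> p \<le> n \<and> 1 \<le> q \<and> q \<le> m \<and> k = p * q"
proof -
  have finM: "finite (blinfun_apply T ` M_op T)"
  proof (rule ccontr)
    assume "infinite (blinfun_apply T ` M_op T)"
    then have "card (blinfun_apply T ` M_op T) = 0" by (rule card.infinite)
    then show False using card2 by simp
  qed
  have "M_op T \<noteq> {}"
  proof
    assume "M_op T = {}"
    then have "card (blinfun_apply T ` M_op T) = 0" by simp
    then show False using card2 by simp
  qed
  then obtain x1 where x1: "x1 \<in> F" using M by blast
  have FM: "F \<subseteq> M_op T" using M by blast
  have cvx: "convex F" using face unfolding ball_face_def by blast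
  have cvxT: "convex (blinfun_apply T ` F)"
    by (rule convex_linear_image[OF bounded_linear.linear[OF blinfun.bounded_linear_right] cvx])
  have finTF: "finite (blinfun_apply T ` F)" by (rule finite_subset[OF image_mono[OF FM] finM])
  define y where "y = blinfun_apply T x1"
  have TF: "\<forall>x\<in>F. blinfun_apply T x = y"
  proof
    fix x assume x: "x \<in> F"
    show "blinfun_apply T x = y" unfolding y_def
      by (rule finite_convex_eq[OF cvxT finTF]) (use x x1 in simp_all)
  qed
  have Fn: "norm x = 1" "norm (blinfun_apply T x) = 1" if "x \<in> F" for x
    using FM that nT unfolding M_op_def by auto
  have ny: "norm y = 1" using Fn(2)[OF x1] unfolding y_def .
  obtain Ba :: "'a set" where Ba: "finite Ba" "independent Ba" "span Ba = UNIV" using fin_dim_basis[OF fa] by blast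
  have "card Ba = dim (UNIV::'a set)" by (rule basis_card_eq_dim) (use Ba in simp_all)
  then have cBa: "card Ba = n" using dn by simp
  obtain X0 where X0: "X0 \<subseteq> F" "independent X0" "F \<subseteq> span X0" "card X0 = dim F" by (rule basis_exists)
  have "finite X0 \<and> card X0 \<le> card Ba" by (rule independent_span_bound[OF Ba(1) X0(2)]) (simp add: Ba(3))
  then have X0fin: "finite X0" and cX0: "card X0 \<le> n" using cBa by simp_all
  have X0ne: "X0 \<noteq> {}"
  proof
    assume "X0 = {}"
    then have "x1 = 0" using X0(3) x1 by auto
    then show False using Fn(1)[OF x1] by simp
  qed
  obtain Eb :: "('b \<Rightarrow>\<^sub>L real) set" where Eb: "finite Eb" "span Eb = UNIV" "card Eb \<le> m"
    using dual_fin_dim[OF fb] dm by blast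
  obtain G0 where G0: "G0 \<subseteq> J_set y" "independent G0" "J_set y \<subseteq> span G0" "card G0 = dim (J_set y)" by (rule basis_exists)
  have "finite G0 \<and> card G0 \<le> card Eb" by (rule independent_span_bound[OF Eb(1) G0(2)]) (simp add: Eb(2))
  then have G0fin: "finite G0" and cG0: "card G0 \<le> m" using Eb(3) by simp_all
  have "y \<noteq> 0" using ny by auto
  then obtain g1 :: "'b \<Rightarrow>\<^sub>L real" where g1: "norm g1 = 1" "blinfun_apply g1 y = norm y" using hb_fd[OF fb] by blast
  have g1J: "g1 \<in> J_set y" using g1 ny unfolding J_set_def by simp
  have G0ne: "G0 \<noteq> {}"
  proof
    assume "G0 = {}"
    then have "g1 = 0" using G0(3) g1J by auto
    then show False using g1(1) by simp
  qed
  have test: "\<exists>S::'a \<Rightarrow>\<^sub>L 'b. \<forall>x\<in>X0. \<forall>g\<in>G0. blinfun_apply g (blinfun_apply S x) = (if x = a \<and> g = b then 1 else 0)"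
    if a: "a \<in> X0" and b: "b \<in> G0" for a b
  proof -
    obtain yb where yb: "blinfun_apply b yb = 1" "\<forall>g'\<in>G0 - {b}. blinfun_apply g' yb = 0"
      using dual_vec[OF G0fin G0(2) b] by blast
    have "\<exists>L. linear L \<and> (\<forall>x\<in>X0. L x = (if x = a then yb else 0))"
      by (rule linear_independent_extend[OF X0(2)])
    then obtain L where L: "linear L" "\<forall>x\<in>X0. L x = (if x = a then yb else 0)" by blast
    have bl: "bounded_linear L" by (rule fd_bounded_linear[OF fa L(1)])
    define S where "S = Blinfun L"
    have Sapp: "blinfun_apply S = L" unfolding S_def using bl by (rule bounded_linear_Blinfun_apply)
    show ?thesis
    proof (intro exI[of _ S] ballI)
      fix x g assume x: "x \<in> X0" and g: "g \<in> G0"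
      have Sx: "blinfun_apply S x = (if x = a then yb else 0)" using L(2) x unfolding Sapp by simp
      show "blinfun_apply g (blinfun_apply S x) = (if x = a \<and> g = b then 1 else 0)"
      proof (cases "x = a")
        case True
        show ?thesis
        proof (cases "g = b")
          case True then show ?thesis using Sx \<open>x = a\<close> yb(1) by simp
        next
          case False then show ?thesis using Sx \<open>x = a\<close> yb(2) g by simp
        qed
      next
        case False then show ?thesis using Sx by (simp add: blinfun.zero_right)
      qed
    qed
  qed
  define E0 where "E0 = (\<lambda>(x, g). phi x g) ` (X0 \<times> G0)"
  have inj: "inj_on (\<lambda>(x, g). phi x g) (X0 \<times> G0)"
  proof (rule inj_onI, clarify)
    fix a b a' b' assume ab: "a \<in> X0" "b \<in> G0" "a' \<in> X0" "b' \<in> G0" and eq: "phi a b = phi a' b'"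
    from test[OF ab(1,2)] obtain S where S: "\<forall>x\<in>X0. \<forall>g\<in>G0. blinfun_apply g (blinfun_apply S x) = (if x = a \<and> g = b then 1 else 0)" ..
    have "blinfun_apply b (blinfun_apply S a) = (if a = a \<and> b = b then 1 else 0)" using S[rule_format, OF ab(1,2)] .
    then have e1: "blinfun_apply (phi a b) S = 1" unfolding phi_apply by (simp only: simp_thms if_True)
    have e2: "blinfun_apply (phi a' b') S = (if a' = a \<and> b' = b then 1 else 0)"
      unfolding phi_apply using S[rule_format, OF ab(3,4)] .
    have "(if a' = a \<and> b' = b then 1 else 0) = (1::real)" using e1 e2 eq by simp
    then have "a' = a \<and> b' = b" by (cases "a' = a \<and> b' = b") simp_all
    then show "a = a' \<and> b = b'" by simp
  qed
  have E0fin: "finite E0" unfolding E0_def using X0fin G0fin by simp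
  have E0ind: "independent E0"
  proof (rule independent_if_scalars_zero[OF E0fin])
    fix c e assume sum0: "(\<Sum>e\<in>E0. c e *\<^sub>R e) = 0" and e: "e \<in> E0"
    from e obtain p where p: "p \<in> X0 \<times> G0" "e = (\<lambda>(x, g). phi x g) p" unfolding E0_def by (rule imageE)
    obtain a b where pab: "p = (a, b)" by (cases p)
    have ab: "a \<in> X0" "b \<in> G0" "e = phi a b" using p unfolding pab by simp_all
    from test[OF ab(1,2)] obtain S where S: "\<forall>x\<in>X0. \<forall>g\<in>G0. blinfun_apply g (blinfun_apply S x) = (if x = a \<and> g = b then 1 else 0)" ..
    have "(\<Sum>e\<in>E0. c e *\<^sub>R e) = (\<Sum>p\<in>X0 \<times> G0. c (phi (fst p) (snd p)) *\<^sub>R phi (fst p) (snd p))"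
      unfolding E0_def by (subst sum.reindex[OF inj]) (simp add: case_prod_beta)
    then have "0 = blinfun_apply (\<Sum>p\<in>X0 \<times> G0. c (phi (fst p) (snd p)) *\<^sub>R phi (fst p) (snd p)) S"
      using sum0 by simp
    also have "\<dots> = (\<Sum>p\<in>X0 \<times> G0. c (phi (fst p) (snd p)) * blinfun_apply (snd p) (blinfun_apply S (fst p)))"
      by (simp add: blinfun.sum_left blinfun.scaleR_left phi_apply)
    also have "\<dots> = (\<Sum>p\<in>X0 \<times> G0. if p = (a, b) then c (phi a b) else 0)"
    proof (rule sum.cong[OF refl])
      fix q assume q: "q \<in> X0 \<times> G0"
      obtain x g where qxg: "q = (x, g)" by (cases q)
      have xg: "x \<in> X0" "g \<in> G0" using q qxg by simp_all
      have Sv: "blinfun_apply g (blinfun_apply S x) = (if x = a \<and> g = b then 1 else 0)" using S[rule_format, OF xg] .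
      show "c (phi (fst q) (snd q)) * blinfun_apply (snd q) (blinfun_apply S (fst q)) = (if q = (a, b) then c (phi a b) else 0)"
        unfolding qxg fst_conv snd_conv Sv by simp
    qed
    also have "\<dots> = c (phi a b)" using ab X0fin G0fin by simp
    finally show "c e = 0" using ab by simp
  qed
  have E0J: "E0 \<subseteq> J_set T"
  proof
    fix e assume "e \<in> E0"
    then obtain p where p: "p \<in> X0 \<times> G0" "e = (\<lambda>(x, g). phi x g) p" unfolding E0_def by (rule imageE)
    obtain x g where pxg: "p = (x, g)" by (cases p)
    have xg: "x \<in> X0" "g \<in> G0" "e = phi x g" using p unfolding pxg by simp_all
    have xF: "x \<in> F" using xg X0 by blast
    have gJ: "norm g = 1" "blinfun_apply g y = 1" using xg G0 unfolding J_set_def by auto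
    have le: "norm e \<le> 1"
    proof (rule norm_blinfun_bound)
      fix S :: "'a \<Rightarrow>\<^sub>L 'b"
      have "norm (blinfun_apply e S) \<le> norm g * norm (blinfun_apply S x)"
        unfolding xg(3) phi_apply by (rule norm_blinfun)
      also have "\<dots> \<le> norm S * norm x" using gJ norm_blinfun[of S x] by simp
      finally show "norm (blinfun_apply e S) \<le> 1 * norm S" using Fn(1)[OF xF] by simp
    qed simp
    have eT: "blinfun_apply e T = 1" unfolding xg(3) phi_apply using TF xF gJ by simp
    have "1 \<le> norm e" using norm_blinfun[of e T] eT nT by simp
    then show "e \<in> J_set T" using le eT unfolding J_set_def by simp
  qed
  have JE0: "J_set T \<subseteq> span E0"
  proof
    fix f assume f: "f \<in> J_set T"
    have "\<forall>S. (\<forall>e\<in>E0. blinfun_apply e S = 0) \<longrightarrow> blinfun_apply f S = 0"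
    proof (intro allI impI)
      fix S :: "'a \<Rightarrow>\<^sub>L 'b" assume hS: "\<forall>e\<in>E0. blinfun_apply e S = 0"
      have base: "\<forall>x\<in>X0. \<forall>g\<in>G0. blinfun_apply g (blinfun_apply S x) = 0"
        using hS unfolding E0_def by (auto simp: phi_apply)
      have ext: "\<forall>x\<in>F. \<forall>g\<in>J_set y. blinfun_apply g (blinfun_apply R x) = 0"
        if hR: "\<forall>x\<in>X0. \<forall>g\<in>G0. blinfun_apply g (blinfun_apply R x) = 0" for R :: "'a \<Rightarrow>\<^sub>L 'b"
      proof (intro ballI)
        fix x g assume x: "x \<in> F" and g: "g \<in> J_set y"
        have sub1: "subspace {g::'b \<Rightarrow>\<^sub>L real. \<forall>x\<in>X0. blinfun_apply g (blinfun_apply R x) = 0}"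
          unfolding subspace_def by (auto simp: blinfun.add_left blinfun.scaleR_left)
        have "span G0 \<subseteq> {g. \<forall>x\<in>X0. blinfun_apply g (blinfun_apply R x) = 0}"
          by (rule span_minimal[OF _ sub1]) (use hR in blast)
        then have gX: "\<forall>x\<in>X0. blinfun_apply g (blinfun_apply R x) = 0" using g G0(3) by blast
        have sub2: "subspace {x. blinfun_apply g (blinfun_apply R x) = 0}"
          unfolding subspace_def by (auto simp: blinfun.add_right blinfun.scaleR_right)
        have "span X0 \<subseteq> {x. blinfun_apply g (blinfun_apply R x) = 0}"
          by (rule span_minimal[OF _ sub2]) (use gX in blast)
        then show "blinfun_apply g (blinfun_apply R x) = 0" using x X0(3) by blast
      qed
      have b2: "\<forall>x\<in>X0. \<forall>g\<in>G0. blinfun_apply g (blinfun_apply (- S) x) = 0"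
        using base by (simp add: blinfun.minus_left blinfun.minus_right)
      have le1: "blinfun_apply f S \<le> 0" by (rule upper_key[OF fa fb nT M TF f ext[OF base]])
      have le2: "blinfun_apply f (- S) \<le> 0" by (rule upper_key[OF fa fb nT M TF f ext[OF b2]])
      then show "blinfun_apply f S = 0" using le1 by (simp add: blinfun.minus_right)
    qed
    then show "f \<in> span E0" using annih[OF E0fin] by blast
  qed
  have "span (J_set T) = span E0"
  proof
    show "span (J_set T) \<subseteq> span E0" using JE0 by (simp add: span_minimal)
    show "span E0 \<subseteq> span (J_set T)" using E0J by (rule span_mono)
  qed
  then have "k = card E0" using ks E0ind unfolding k_smooth_def by (simp add: dim_eq_card_independent)
  also have "card E0 = card X0 * card G0" unfolding E0_def
    by (simp add: card_image[OF inj] card_cartesian_product)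
  finally have "k = card X0 * card G0" .
  moreover have "1 \<le> card X0" using X0ne X0fin by (simp add: Suc_le_eq card_gt_0_iff)
  moreover have "1 \<le> card G0" using G0ne G0fin by (simp add: Suc_le_eq card_gt_0_iff)
  ultimately show ?thesis using cX0 cG0 by blast
qed

theorem mainTheorem14:
  fixes T :: "'a::banach \<Rightarrow>\<^sub>L 'b::banach" and F :: "'a set" and k n m :: nat
  assumes "fin_dim_space TYPE('a)" and "fin_dim_space TYPE('b)"
    and "polyhedral_space TYPE('a)" and "polyhedral_space TYPE('b)"
    and "dim (UNIV :: 'a set) = n" and "dim (UNIV :: 'b set) = m"
    and "norm T = 1"
    and "ball_face F" and "M_op T = F \<union> uminus ` F"
    and "card (blinfun_apply T ` M_op T) = 2"
    and "k_smooth k T"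
  shows "\<exists>p q. 1 \<le> p \<and> p \<le> n \<and> 1 \<le> q \<and> q \<le> m \<and> k = p * q"
  by (rule main_assembly[OF assms(1,2,5,6,7,8,9,10,11)])

end
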